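(* Let $\mathcal{G}_n(\mathcal{X},\mathcal{Y},d,Q)$ be a position-optimization game (as defined in the context) and let $\bm{x}$ be a pure strategy profile in which some player $i$ has $x_i\in\mathcal{X}^*$. Then $u_i(x_i,\bm{x}_{-i})\ge\frac{P(x_i)}{k_{\bm{x}}(x_i)}$, with equality if $\bm{x}$ covers $\mathcal{X}^*$. Moreover, for any $x'\in\mathcal{X}^*$ with $x'\neq x_i$, $u_i(x',\bm{x}_{-i})\ge\frac{P(x')}{k_{\bm{x}}(x')+1}$, with equality if $\bm{x}$ covers $\mathcal{X}^*$ and $k_{\bm{x}}(x_i)\ge 2$.
   Context: Position-optimization game: $\mathcal{X}$ is an arbitrary set of positions, $\mathcal{Y}$ an arbitrary set of targets, $d:\mathcal{X}\times\mathcal{Y}\to[0,\infty]$ a proximity function. For $y\in\mathcal{Y}$ let $x^*(y)=\arg\min_{x\in\mathcal{X}} d(x,y)$, and $\mathcal{X}^*=\bigcup_{y\in\mathcal{Y}}x^*(y)$ (pseudo-targets). $Q$ is a probability distribution on $\mathcal{Y}$ with $Q(\{y:|x^*(y)|>1\})=0$ and $|\mathcal{X}^*|<\infty$. For $x\in\mathcal{X}^*$ let $P(x)=Q(\{y: x^*(y)=\{x\}\})$. In the game $\mathcal{G}_n(\mathcal{X},\mathcal{Y},d,Q)$, players $i\in[n]$ choose positions $x_i\in\mathcal{X}$, $\bm{x}=(x_1,\dots,x_n)$; with $X_{\min}(\bm{x},y)=\arg\min_{x_i\in\bm{x}} d(x_i,y)$, player $i$'s utility is $u_i(x_i,\bm{x}_{-i})=\mathbb{E}_{y\sim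 Q}\big[\mathbb{1}[x_i\in X_{\min}(\bm{x},y)]/|X_{\min}(\bm{x},y)|\big]$; $u_i(x',\bm{x}_{-i})$ denotes the utility when player $i$ plays $x'$ instead and the others are unchanged. $k_{\bm{x}}(x)$ is the number of players at position $x$ in $\bm{x}$. A profile $\bm{x}$ covers $\mathcal{X}^*$ if $k_{\bm{x}}(x)\ge1$ for all $x\in\mathcal{X}^*$. *)

theory Defs
  imports "HOL-Probability.Probability"
begin

text \<open>Positions: type 'x (the set X); targets: type 'y (the set Y).
  Proximity d :: 'x => 'y => ennreal (values in [0,inf]).
  A profile of n players is xs :: nat => 'x restricted to players {..<n}.\<close>

definition xstar :: "('x \<Rightarrow> 'y \<Rightarrow> ennreal) \<Rightarrow> 'y \<Rightarrow> 'x set" where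
  "xstar d y = {x. \<forall>x'. d x y \<le> d x' y}"

definition Xstar :: "('x \<Rightarrow> 'y \<Rightarrow> ennreal) \<Rightarrow> 'x set" where
  "Xstar d = (\<Union>y. xstar d y)"

definition Pmass :: "('x \<Rightarrow> 'y \<Rightarrow> ennreal) \<Rightarrow> 'y measure \<Rightarrow> 'x \<Rightarrow> real" where
  "Pmass d Q x = measure Q {y \<in> space Q. xstar d y = {x}}"

definition Xmin :: "nat \<Rightarrow> ('x \<Rightarrow> 'y \<Rightarrow> ennreal) \<Rightarrow> (nat \<Rightarrow> 'x) \<Rightarrow> 'y \<Rightarrow> nat set" where
  "Xmin n d xs y = {j. j < n \<and> (\<forall>l<n. d (xs j) y \<le> d (xs l) y)}"

definition utility :: "nat \<Rightarrow> ('x \<Rightarrow> 'y \<Rightarrow> ennreal) \<Rightarrow> 'y measure \<Rightarrow> (nat \<Rightarrow> 'x) \<Rightarrow> nat \<Rightarrow> real" where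
  "utility n d Q xs i =
     (\<integral>y. (if i \<in> Xmin n d xs y then 1 / real (card (Xmin n d xs y)) else 0) \<partial>Q)"

definition kcount :: "nat \<Rightarrow> (nat \<Rightarrow> 'x) \<Rightarrow> 'x \<Rightarrow> nat" where
  "kcount n xs x = card {j. j < n \<and> xs j = x}"

definition covers :: "nat \<Rightarrow> ('x \<Rightarrow> 'y \<Rightarrow> ennreal) \<Rightarrow> (nat \<Rightarrow> 'x) \<Rightarrow> bool" where
  "covers n d xs \<longleftrightarrow> (\<forall>x\<in>Xstar d. kcount n xs x \<ge> 1)"

end

theory Submission
  imports Defs
begin
lemma Xmin_meas:
  assumes d_meas: "\<And>x. d x \<in> borel_measurable Q"
  shows "(\<lambda>y. if i \<in> Xmin n d ys y then 1 / real (card (Xmin n d ys y)) else 0) \<in> borel_measurable Q"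
proof -
  have g: "(\<lambda>y. Xmin n d ys y) \<in> measurable Q (count_space (Pow {..<n}))"
  proof (subst measurable_count_space_eq_countable)
    show "countable (Pow {..<n})" by (simp add: countable_finite)
    have "\<forall>a\<in>Pow {..<n}. (\<lambda>y. Xmin n d ys y) -` {a} \<inter> space Q \<in> sets Q"
    proof
      fix a
      have "Measurable.pred Q (\<lambda>y. Xmin n d ys y = a)"
        unfolding Xmin_def set_eq_iff mem_Collect_eq using d_meas by measurable
      then show "(\<lambda>y. Xmin n d ys y) -` {a} \<inter> space Q \<in> sets Q"
        by (simp add: pred_def vimage_def Int_def conj_commute)
    qed
    then show "(\<lambda>y. Xmin n d ys y) \<in> space Q \<rightarrow> Pow {..<n} \<and> (\<forall>a\<in>Pow {..<n}. (\<lambda>y. Xmin n d ys y) -` {a} \<inter> space Q \<in> sets Q)"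
      by (auto simp: Xmin_def)
  qed
  have h: "(\<lambda>S. if i \<in> S then 1 / real (card S) else 0) \<in> borel_measurable (count_space (Pow {..<n}))"
    by simp
  show ?thesis using measurable_compose[OF g h] by (simp add: o_def)
qed

lemma strict_min:
  assumes "xstar d y = {z}" "x \<noteq> z"
  shows "d z y < d x y"
proof -
  have "z \<in> xstar d y" using assms by auto
  then have zmin: "\<forall>x'. d z y \<le> d x' y" by (simp add: xstar_def)
  have "x \<notin> xstar d y" using assms by auto
  then obtain x' where "\<not> d x y \<le> d x' y" by (auto simp: xstar_def)
  then have "d x' y < d x y" by simp
  with zmin show ?thesis using order.strict_trans1 by blast
qed

lemma key1:
  assumes "i < n" "xstar d y = {z}" "ys i = z"
  shows "Xmin n d ys y = {j. j < n \<and> ys j = z}"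
proof -
  have zmin: "\<forall>x'. d z y \<le> d x' y" using assms(2) by (auto simp: xstar_def)
  show ?thesis
  proof (intro set_eqI iffI)
    fix j assume "j \<in> Xmin n d ys y"
    then have "j < n" "d (ys j) y \<le> d (ys i) y" using assms(1) by (auto simp: Xmin_def)
    then show "j \<in> {j. j < n \<and> ys j = z}"
      using strict_min[OF assms(2), of "ys j"] assms(3) by (auto simp: not_le[symmetric])
  next
    fix j assume "j \<in> {j. j < n \<and> ys j = z}"
    then show "j \<in> Xmin n d ys y" using zmin by (auto simp: Xmin_def)
  qed
qed

lemma key2:
  assumes "i < n" "xstar d y = {z}" "ys i \<noteq> z" "j < n" "ys j = z"
  shows "i \<notin> Xmin n d ys y"
  using strict_min[OF assms(2) assms(3)] assms by (auto simp: Xmin_def not_le[symmetric])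

lemma general:
  fixes d :: "'x \<Rightarrow> 'y \<Rightarrow> ennreal" and Q :: "'y measure"
  assumes Q: "prob_space Q" and spaceQ: "space Q = UNIV"
    and d_meas: "\<And>x. d x \<in> borel_measurable Q"
    and nonempty: "\<And>y. xstar d y \<noteq> {}"
    and unique: "{y \<in> space Q. \<exists>a\<in>xstar d y. \<exists>b\<in>xstar d y. a \<noteq> b} \<in> null_sets Q"
    and P_meas: "\<forall>x\<in>Xstar d. {y \<in> space Q. xstar d y = {x}} \<in> sets Q"
    and i: "i < n" and z: "z \<in> Xstar d" and ysi: "ys i = z"
  shows "utility n d Q ys i \<ge> Pmass d Q z / real (card {j. j < n \<and> ys j = z})"
    and "(\<forall>w\<in>Xstar d. w \<noteq> z \<longrightarrow> (\<exists>j<n. ys j = w)) \<Longrightarrow>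
         utility n d Q ys i = Pmass d Q z / real (card {j. j < n \<and> ys j = z})"
proof -
  interpret prob_space Q by (rule Q)
  define A where "A = {y \<in> space Q. xstar d y = {z}}"
  define k where "k = card {j. j < n \<and> ys j = z}"
  define f where "f = (\<lambda>y. if i \<in> Xmin n d ys y then 1 / real (card (Xmin n d ys y)) else 0)"
  have A: "A \<in> sets Q" unfolding A_def using P_meas z by blast
  have fm: "f \<in> borel_measurable Q" unfolding f_def by (rule Xmin_meas[OF d_meas])
  have "f y \<le> 1" for y
  proof -
    have "finite (Xmin n d ys y)" by (rule finite_subset[of _ "{..<n}"]) (auto simp: Xmin_def)
    then have "i \<in> Xmin n d ys y \<Longrightarrow> card (Xmin n d ys y) \<ge> 1"
      by (metis One_nat_def Suc_leI card_gt_0_iff empty_iff)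
    then show ?thesis unfolding f_def by auto
  qed
  moreover have f0: "f y \<ge> 0" for y unfolding f_def by auto
  ultimately have fi: "integrable Q f"
    by (intro integrable_const_bound[where B=1] fm) auto
  have gi: "integrable Q (\<lambda>y. indicator A y / real k)"
    using A by (intro integrable_divide integrable_real_indicator) (auto simp: less_top[symmetric])
  have intg: "(\<integral>y. indicator A y / real k \<partial>Q) = Pmass d Q z / real k"
    using A by (simp add: Pmass_def A_def)
  have fA: "f y = 1 / real k" if "y \<in> A" for y
  proof -
    have "xstar d y = {z}" using that by (simp add: A_def)
    from key1[where ys=ys, OF i this ysi] have "Xmin n d ys y = {j. j < n \<and> ys j = z}" .
    moreover have "i \<in> {j. j < n \<and> ys j = z}" using i ysi by simp
    ultimately show ?thesis by (simp add: f_def k_def)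
  qed
  have pw: "indicator A y / real k \<le> f y" for y
    using fA[of y] f0[of y] by (cases "y \<in> A") auto
  have "(\<integral>y. indicator A y / real k \<partial>Q) \<le> integral\<^sup>L Q f"
    by (rule integral_mono[OF gi fi pw])
  then have "Pmass d Q z / real k \<le> integral\<^sup>L Q f"
    using intg by linarith
  then show "utility n d Q ys i \<ge> Pmass d Q z / real (card {j. j < n \<and> ys j = z})"
    by (simp add: utility_def f_def k_def)
  assume cov: "\<forall>w\<in>Xstar d. w \<noteq> z \<longrightarrow> (\<exists>j<n. ys j = w)"
  have "AE y in Q. f y = indicator A y / real k"
    using AE_not_in[OF unique]
  proof (rule eventually_mono)
    fix y assume "y \<notin> {y \<in> space Q. \<exists>a\<in>xstar d y. \<exists>b\<in>xstar d y. a \<noteq> b}"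
    then have u: "\<forall>a\<in>xstar d y. \<forall>b\<in>xstar d y. a = b" using spaceQ by auto
    obtain w where w: "w \<in> xstar d y" using nonempty by blast
    then have xw: "xstar d y = {w}" using u by blast
    have wX: "w \<in> Xstar d" using w by (auto simp: Xstar_def)
    show "f y = indicator A y / real k"
    proof (cases "w = z")
      case True
      then have "y \<in> A" using xw spaceQ by (simp add: A_def)
      then show ?thesis using fA by simp
    next
      case False
      then have "y \<notin> A" using xw by (auto simp: A_def)
      moreover obtain j where "j < n" "ys j = w" using cov wX False by blast
      ultimately show ?thesis using key2[where ys=ys, OF i xw _ \<open>j < n\<close>] ysi False by (simp add: f_def)
    qed
  qed
  then have "integral\<^sup>L Q f = (\<integral>y. indicator A y / real k \<partial>Q)"
    by (intro integral_cong_AE fm) (use gi in auto)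
  then show "utility n d Q ys i = Pmass d Q z / real (card {j. j < n \<and> ys j = z})"
    using intg by (simp add: utility_def f_def k_def)
qed
theorem lemma1:
  fixes d :: "'x \<Rightarrow> 'y \<Rightarrow> ennreal" and Q :: "'y measure"
    and n :: nat and xs :: "nat \<Rightarrow> 'x" and i :: nat
  assumes Q: "prob_space Q" and spaceQ: "space Q = UNIV"
    and d_meas: "\<And>x. d x \<in> borel_measurable Q"
    and nonempty: "\<And>y. xstar d y \<noteq> {}"
    and unique: "{y \<in> space Q. \<exists>a\<in>xstar d y. \<exists>b\<in>xstar d y. a \<noteq> b} \<in> null_sets Q"
    and P_meas: "\<And>x. x \<in> Xstar d \<Longrightarrow> {y \<in> space Q. xstar d y = {x}} \<in> sets Q"
    and fin: "finite (Xstar d)"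
    and i: "i < n" and xi: "xs i \<in> Xstar d"
  shows "utility n d Q xs i \<ge> Pmass d Q (xs i) / real (kcount n xs (xs i))
       \<and> (covers n d xs \<longrightarrow> utility n d Q xs i = Pmass d Q (xs i) / real (kcount n xs (xs i)))
       \<and> (\<forall>x'\<in>Xstar d. x' \<noteq> xs i \<longrightarrow>
            utility n d Q (xs(i := x')) i \<ge> Pmass d Q x' / real (kcount n xs x' + 1)
          \<and> (covers n d xs \<and> kcount n xs (xs i) \<ge> 2 \<longrightarrow>
             utility n d Q (xs(i := x')) i = Pmass d Q x' / real (kcount n xs x' + 1)))"
proof -
  have Pm: "\<forall>x\<in>Xstar d. {y \<in> space Q. xstar d y = {x}} \<in> sets Q" using P_meas by blast
  note G = general[OF Q spaceQ d_meas nonempty unique Pm]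
  have k: "kcount n xs (xs i) = card {j. j < n \<and> xs j = xs i}" by (simp add: kcount_def)
  have A: "utility n d Q xs i \<ge> Pmass d Q (xs i) / real (kcount n xs (xs i))"
    using G(1)[where ys=xs, OF i xi refl] k by simp
  have B: "covers n d xs \<longrightarrow> utility n d Q xs i = Pmass d Q (xs i) / real (kcount n xs (xs i))"
  proof
    assume cov: "covers n d xs"
    have "\<forall>w\<in>Xstar d. w \<noteq> xs i \<longrightarrow> (\<exists>j<n. xs j = w)"
    proof (intro ballI impI)
      fix w assume "w \<in> Xstar d"
      then have "kcount n xs w \<ge> 1" using cov by (simp add: covers_def)
      then have "{j. j < n \<and> xs j = w} \<noteq> {}" unfolding kcount_def by (metis card.empty not_one_le_zero)
      then show "\<exists>j<n. xs j = w" by blast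
    qed
    then show "utility n d Q xs i = Pmass d Q (xs i) / real (kcount n xs (xs i))"
      using G(2)[where ys=xs, OF i xi refl] k by simp
  qed
  have C: "\<forall>x'\<in>Xstar d. x' \<noteq> xs i \<longrightarrow>
            utility n d Q (xs(i := x')) i \<ge> Pmass d Q x' / real (kcount n xs x' + 1)
          \<and> (covers n d xs \<and> kcount n xs (xs i) \<ge> 2 \<longrightarrow>
             utility n d Q (xs(i := x')) i = Pmass d Q x' / real (kcount n xs x' + 1))"
  proof (intro ballI impI conjI)
    fix x' assume x': "x' \<in> Xstar d" and ne: "x' \<noteq> xs i"
    have eq: "{j. j < n \<and> (xs(i := x')) j = x'} = insert i {j. j < n \<and> xs j = x'}"
      using i by auto
    have "i \<notin> {j. j < n \<and> xs j = x'}" using ne by auto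
    then have kc: "card {j. j < n \<and> (xs(i := x')) j = x'} = kcount n xs x' + 1"
      unfolding eq kcount_def by simp
    show "utility n d Q (xs(i := x')) i \<ge> Pmass d Q x' / real (kcount n xs x' + 1)"
      using G(1)[where ys="xs(i := x')" and z=x', OF i x'] unfolding kc by simp
    assume H: "covers n d xs \<and> kcount n xs (xs i) \<ge> 2"
    have "\<forall>w\<in>Xstar d. w \<noteq> x' \<longrightarrow> (\<exists>j<n. (xs(i := x')) j = w)"
    proof (intro ballI impI)
      fix w assume w: "w \<in> Xstar d" "w \<noteq> x'"
      show "\<exists>j<n. (xs(i := x')) j = w"
      proof (cases "w = xs i")
        case True
        have "card {j. j < n \<and> xs j = w} \<ge> 2" using H True by (simp add: kcount_def)
        moreover have "card {i} = 1" by simp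
        ultimately have "\<not> {j. j < n \<and> xs j = w} \<subseteq> {i}"
          using card_mono[of "{i}" "{j. j < n \<and> xs j = w}"] by auto
        then obtain j where "j < n" "xs j = w" "j \<noteq> i" by blast
        then show ?thesis by auto
      next
        case False
        have "kcount n xs w \<ge> 1" using H w by (simp add: covers_def)
        then have "{j. j < n \<and> xs j = w} \<noteq> {}" unfolding kcount_def by (metis card.empty not_one_le_zero)
        then obtain j where "j < n" "xs j = w" by blast
        moreover have "j \<noteq> i" using False \<open>xs j = w\<close> by auto
        ultimately show ?thesis by auto
      qed
    qed
    then show "utility n d Q (xs(i := x')) i = Pmass d Q x' / real (kcount n xs x' + 1)"
      using G(2)[where ys="xs(i := x')" and z=x', OF i x'] unfolding kc by simp
  qed
  show ?thesis using A B C by blast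
qed

end
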